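(* Let $n,m,r\in\mathbb{N}$, $\overline{f}\in C[0,1]$, let $\overline{B}_{n,m}$ be the composite Bernstein operator and $(\overline{B}_{n,m})^r$ its $r$-th iterate, and let $S_{\Delta_m}\overline{f}$ be the piecewise linear interpolant of $\overline{f}$ at the nodes $0,\frac1m,\dots,\frac{m-1}{m},1$. Then for every $k\in\{1,\dots,m\}$ and $x\in\left[\frac{k-1}{m},\frac{k}{m}\right]$, $$ \left|(\overline{B}_{n,m})^r(\overline{f};x)-S_{\Delta_m}(\overline{f};x)\right|\le\frac94\,\omega_2\left(\overline{f};\sqrt{\left(x-\frac{k-1}{m}\right)\left(\frac{k}{m}-x\right)\left(1-\frac1n\right)^r}\right), $$ and consequently $$ \left\|(\overline{B}_{n,m})^r(\overline{f})-S_{\Delta_m}(\overline{f})\right\|_\infty\le\frac94\,\omega_2\left(\overline{f};\frac{1}{2m}\sqrt{\left(1-\frac1n\right)^r}\right); $$ in particular $(\overline{B}_{n,m})^r(\overline{f})\to S_{\Delta_m}(\overline{f})$ uniformly on $[0,1]$ as $r\to\infty$ for fixed $n,m$.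
   Context: For $a<b$, $f:[a,b]\to\mathbb{R}$ and $n\in\mathbb{N}$, $B_n^{[a,b]}(f;x)=\frac{1}{(b-a)^n}\sum_{i=0}^n\binom{n}{i}(x-a)^i(b-x)^{n-i}f\left(a+i\frac{b-a}{n}\right)$. For $1\le k\le m$ put $B_{n,k}(f;x):=B_n^{[\frac{k-1}{m},\frac{k}{m}]}(f;x)$ and $\overline{B}_{n,m}(f;x):=B_{n,k}(f;x)$ for $x\in\left[\frac{k-1}{m},\frac{k}{m}\right]$; this maps $C[0,1]$ into $C[0,1]$. $\omega_2(f,\delta)=\sup\{|f(x-h)-2f(x)+f(x+h)|: x\pm h\in[0,1],\ |h|\le\delta\}$. $\|\cdot\|_\infty$ is the sup norm on $[0,1]$. *)

theory Defs
  imports "HOL-Analysis.Analysis"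
begin

definition bern_ab :: "real \<Rightarrow> real \<Rightarrow> nat \<Rightarrow> (real \<Rightarrow> real) \<Rightarrow> real \<Rightarrow> real" where
  "bern_ab a b n f x =
     (1 / (b - a) ^ n) * (\<Sum>i = 0..n. real (n choose i) * (x - a) ^ i * (b - x) ^ (n - i)
                                       * f (a + real i * (b - a) / real n))"

text \<open>At interior nodes the two adjacent choices agree, since Bernstein polynomials
  and linear interpolants interpolate at the endpoints.\<close>
definition sub_idx :: "nat \<Rightarrow> real \<Rightarrow> nat" where
  "sub_idx m x = max 1 (nat \<lceil>real m * x\<rceil>)"

definition comp_bern :: "nat \<Rightarrow> nat \<Rightarrow> (real \<Rightarrow> real) \<Rightarrow> real \<Rightarrow> real" where
  "comp_bern n m f x =
     (let k = sub_idx m x in bern_ab ((real k - 1) / real m) (real k / real m) n f x)"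

definition pw_lin :: "nat \<Rightarrow> (real \<Rightarrow> real) \<Rightarrow> real \<Rightarrow> real" where
  "pw_lin m f x =
     (let k = sub_idx m x; a = (real k - 1) / real m; b = real k / real m
      in ((b - x) * f a + (x - a) * f b) / (b - a))"

definition omega2 :: "(real \<Rightarrow> real) \<Rightarrow> real \<Rightarrow> real" where
  "omega2 f \<delta> = Sup {\<bar>f (x - h) - 2 * f x + f (x + h)\<bar> | x h.
                        x - h \<in> {0..1} \<and> x + h \<in> {0..1} \<and> \<bar>h\<bar> \<le> \<delta>}"

definition sup_norm01 :: "(real \<Rightarrow> real) \<Rightarrow> real" where
  "sup_norm01 g = Sup ((\<lambda>x. \<bar>g x\<bar>) ` {0..1})"

end

theory Submission imports Defs begin

lemma bern_alt:
  assumes "a < b"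
  shows "bern_ab a b n g x = (\<Sum>i\<le>n. Bernstein n i ((x-a)/(b-a)) * g (a + real i*(b-a)/real n))"
proof -
  have s: "b - a > 0" using assms by simp
  have "bern_ab a b n g x = (\<Sum>i\<le>n. (1/(b-a)^n) * (real (n choose i) * (x - a) ^ i * (b - x) ^ (n - i)
                                       * g (a + real i * (b - a) / real n)))"
    unfolding bern_ab_def by (simp add: sum_distrib_left atMost_atLeast0)
  also have "\<dots> = (\<Sum>i\<le>n. Bernstein n i ((x-a)/(b-a)) * g (a + real i*(b-a)/real n))"
  proof (rule sum.cong[OF refl])
    fix i assume "i \<in> {..n}"
    then have i: "i \<le> n" by simp
    have e1: "1 - (x-a)/(b-a) = (b-x)/(b-a)" using s by (simp add: field_simps)
    have e2: "(b-a)^n = (b-a)^i * (b-a)^(n-i)" using i by (simp add: power_add[symmetric])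
    show "(1/(b-a)^n) * (real (n choose i) * (x - a) ^ i * (b - x) ^ (n - i)
                                       * g (a + real i * (b - a) / real n)) =
      Bernstein n i ((x-a)/(b-a)) * g (a + real i*(b-a)/real n)"
      unfolding Bernstein_def e1 e2 using s by (simp add: power_divide field_simps)
  qed
  finally show ?thesis .
qed

lemma node_in:
  assumes "a < b" "i \<le> n"
  shows "a + real i*(b-a)/real n \<in> {a..b}"
proof (cases "n = 0")
  case True then show ?thesis using assms by simp
next
  case False
  have "real i*(b-a)/real n \<le> b - a" using assms False
    by (simp add: divide_le_eq mult_right_mono mult.commute)
  moreover have "0 \<le> real i*(b-a)/real n" using assms by simp
  ultimately show ?thesis by simp
qed

lemma bern_cong:
  assumes "a < b" "\<forall>t\<in>{a..b}. g t = h t"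
  shows "bern_ab a b n g x = bern_ab a b n h x"
  unfolding bern_ab_def using assms node_in[OF assms(1)]
  by (intro arg_cong[where f="\<lambda>s. _ * s"] sum.cong) auto

lemma bern_mono:
  assumes "a < b" "x \<in> {a..b}" "\<forall>t\<in>{a..b}. g t \<le> h t"
  shows "bern_ab a b n g x \<le> bern_ab a b n h x"
proof -
  have y: "0 \<le> (x-a)/(b-a)" "(x-a)/(b-a) \<le> 1" using assms by auto
  show ?thesis unfolding bern_alt[OF assms(1)]
    using assms node_in[OF assms(1)] Bernstein_nonneg[OF y]
    by (intro sum_mono mult_left_mono) auto
qed

lemma bern_diff: "bern_ab a b n (\<lambda>t. g t - h t) x = bern_ab a b n g x - bern_ab a b n h x"
  unfolding bern_ab_def by (simp add: sum_subtractf algebra_simps)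

lemma bern_cmult: "bern_ab a b n (\<lambda>t. c * g t) x = c * bern_ab a b n g x"
  unfolding bern_ab_def by (simp add: sum_distrib_left algebra_simps)

lemma bern_affine:
  assumes "a < b" "n \<ge> 1"
  shows "bern_ab a b n (\<lambda>t. c0 + c1 * t) x = c0 + c1 * x"
proof -
  let ?y = "(x-a)/(b-a)"
  have "bern_ab a b n (\<lambda>t. c0 + c1 * t) x =
     (\<Sum>i\<le>n. (c0 + c1*a) * Bernstein n i ?y + (c1*(b-a)/real n) * (real i * Bernstein n i ?y))"
    unfolding bern_alt[OF assms(1)] by (intro sum.cong) (auto simp: algebra_simps)
  also have "\<dots> = (c0 + c1*a) + (c1*(b-a)/real n) * (real n * ?y)"
    by (simp only: sum.distrib sum_distrib_left[symmetric] sum_Bernstein sum_k_Bernstein) simp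
  also have "\<dots> = c0 + c1 * x" using assms by (simp add: field_simps)
  finally show ?thesis .
qed

lemma bern_w:
  assumes "a < b" "n \<ge> 1"
  shows "bern_ab a b n (\<lambda>t. (t-a)*(b-t)) x = (1 - 1/real n) * ((x-a)*(b-x))"
proof -
  let ?y = "(x-a)/(b-a)"
  have "bern_ab a b n (\<lambda>t. (t-a)*(b-t)) x =
     (\<Sum>i\<le>n. ((b-a)^2/real n) * (real i * Bernstein n i ?y)
        - ((b-a)^2/(real n)^2) * (real i * (real i - 1) * Bernstein n i ?y)
        - ((b-a)^2/(real n)^2) * (real i * Bernstein n i ?y))"
    unfolding bern_alt[OF assms(1)] using assms
    by (intro sum.cong) (auto simp: field_simps power2_eq_square)
  also have "\<dots> = ((b-a)^2/real n) * (real n * ?y) - ((b-a)^2/(real n)^2) * (real n * (real n - 1) * ?y^2)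
       - ((b-a)^2/(real n)^2) * (real n * ?y)"
    by (simp only: sum_subtractf sum_distrib_left[symmetric] sum_kk_Bernstein sum_k_Bernstein)
  also have "\<dots> = (1 - 1/real n) * (((b-a)*?y)*((b-a)*(1-?y)))"
  proof -
    have "\<And>y s::real. ((s)^2/real n) * (real n * y) - ((s)^2/(real n)^2) * (real n * (real n - 1) * y^2)
       - ((s)^2/(real n)^2) * (real n * y) = (1 - 1/real n) * ((s*y)*(s*(1-y)))"
      using assms by (simp add: field_simps power2_eq_square)
    then show ?thesis .
  qed
  also have "(b-a)*?y = x - a" using assms by (auto simp: field_simps)
  also have "(b-a)*(1-?y) = b - x" using assms by (auto simp: field_simps)
  finally show ?thesis .
qed

lemma bern_left:
  assumes "a < b" "n \<ge> 1"
  shows "bern_ab a b n g a = g a"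
proof -
  have "(\<Sum>i\<le>n. Bernstein n i ((a-a)/(b-a)) * g (a + real i*(b-a)/real n))
      = (\<Sum>i\<le>n. if i = 0 then g a else 0)"
    using assms by (intro sum.cong) (auto simp: Bernstein_def power_0_left)
  then show ?thesis unfolding bern_alt[OF assms(1)] by simp
qed

lemma bern_right:
  assumes "a < b" "n \<ge> 1"
  shows "bern_ab a b n g b = g b"
proof -
  have "(\<Sum>i\<le>n. Bernstein n i ((b-a)/(b-a)) * g (a + real i*(b-a)/real n))
      = (\<Sum>i\<le>n. if i = n then g b else 0)"
    using assms by (intro sum.cong) (auto simp: Bernstein_def power_0_left)
  then show ?thesis unfolding bern_alt[OF assms(1)] by simp
qed

lemma it_diff: "(bern_ab a b n ^^ r) (\<lambda>t. g t - h t) = (\<lambda>x. (bern_ab a b n ^^ r) g x - (bern_ab a b n ^^ r) h x)"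
  by (induction r) (simp_all add: bern_diff)

lemma it_cmult: "(bern_ab a b n ^^ r) (\<lambda>t. c * g t) = (\<lambda>x. c * (bern_ab a b n ^^ r) g x)"
  by (induction r) (simp_all add: bern_cmult)

lemma it_cong:
  assumes "a < b" "\<forall>t\<in>{a..b}. g t = h t"
  shows "\<forall>x\<in>{a..b}. (bern_ab a b n ^^ r) g x = (bern_ab a b n ^^ r) h x"
proof (induction r)
  case 0 then show ?case using assms by simp
next
  case (Suc r) then show ?case using bern_cong[OF assms(1)] by simp
qed

lemma it_mono:
  assumes "a < b" "\<forall>t\<in>{a..b}. g t \<le> h t"
  shows "\<forall>x\<in>{a..b}. (bern_ab a b n ^^ r) g x \<le> (bern_ab a b n ^^ r) h x"
proof (induction r)
  case 0 then show ?case using assms by simp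
next
  case (Suc r) then show ?case using bern_mono[OF assms(1)] by simp
qed

lemma it_fix:
  assumes "a < b" "\<forall>x\<in>{a..b}. bern_ab a b n g x = g x"
  shows "\<forall>x\<in>{a..b}. (bern_ab a b n ^^ r) g x = g x"
proof (induction r)
  case 0 then show ?case by simp
next
  case (Suc r)
  show ?case
  proof
    fix x assume x: "x \<in> {a..b}"
    have "(bern_ab a b n ^^ Suc r) g x = bern_ab a b n ((bern_ab a b n ^^ r) g) x" by simp
    also have "\<dots> = bern_ab a b n g x" using bern_cong[OF assms(1)] Suc by blast
    also have "\<dots> = g x" using assms x by blast
    finally show "(bern_ab a b n ^^ Suc r) g x = g x" .
  qed
qed

lemma it_affine:
  assumes "a < b" "n \<ge> 1" "x \<in> {a..b}"
  shows "(bern_ab a b n ^^ r) (\<lambda>t. c0 + c1 * t) x = c0 + c1 * x"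
  using it_fix[OF assms(1), of n "\<lambda>t. c0 + c1 * t"] bern_affine[OF assms(1,2)] assms(3) by blast

lemma it_w:
  assumes "a < b" "n \<ge> 1"
  shows "\<forall>x\<in>{a..b}. (bern_ab a b n ^^ r) (\<lambda>t. (t-a)*(b-t)) x = (1 - 1/real n)^r * ((x-a)*(b-x))"
proof (induction r)
  case 0 then show ?case by simp
next
  case (Suc r)
  show ?case
  proof
    fix x assume x: "x \<in> {a..b}"
    have "(bern_ab a b n ^^ Suc r) (\<lambda>t. (t-a)*(b-t)) x = bern_ab a b n ((bern_ab a b n ^^ r) (\<lambda>t. (t-a)*(b-t))) x" by simp
    also have "\<dots> = bern_ab a b n (\<lambda>t. (1 - 1/real n)^r * ((t-a)*(b-t))) x"
      by (rule bern_cong[OF assms(1)]) (use Suc in blast)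
    also have "\<dots> = (1 - 1/real n)^r * ((1 - 1/real n) * ((x-a)*(b-x)))"
      by (simp add: bern_cmult bern_w[OF assms])
    finally show "(bern_ab a b n ^^ Suc r) (\<lambda>t. (t-a)*(b-t)) x = (1 - 1/real n)^(Suc r) * ((x-a)*(b-x))"
      by simp
  qed
qed

lemma it_left:
  assumes "a < b" "n \<ge> 1"
  shows "(bern_ab a b n ^^ r) g a = g a"
  by (induction r) (simp_all add: bern_left[OF assms])

lemma it_right:
  assumes "a < b" "n \<ge> 1"
  shows "(bern_ab a b n ^^ r) g b = g b"
  by (induction r) (simp_all add: bern_right[OF assms])

lemma sub_idx_cases:
  assumes "m \<ge> 1" "1 \<le> k" "x \<in> {(real k - 1)/real m .. real k/real m}"
  shows "sub_idx m x = k \<or> (x = (real k - 1)/real m \<and> k \<ge> 2 \<and> sub_idx m x = k - 1)"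
proof -
  have mpos: "real m > 0" using assms by simp
  have lo: "real k - 1 \<le> real m * x" and hi: "real m * x \<le> real k"
    using assms mpos by (auto simp: field_simps)
  show ?thesis
  proof (cases "real m * x = real k - 1")
    case True
    then have xe: "x = (real k - 1)/real m" using mpos by (simp add: field_simps)
    have c: "\<lceil>real m * x\<rceil> = int k - 1" using True by simp
    show ?thesis
    proof (cases "k \<ge> 2")
      case True then show ?thesis using c xe unfolding sub_idx_def by (simp add: nat_diff_distrib)
    next
      case False then have "k = 1" using assms by simp
      then show ?thesis using c unfolding sub_idx_def by simp
    qed
  next
    case False
    then have "real k - 1 < real m * x" using lo by simp
    then have "\<lceil>real m * x\<rceil> = int k" using hi by (simp add: ceiling_eq_iff)
    then show ?thesis unfolding sub_idx_def using assms by simp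
  qed
qed

lemma comp_iter:
  assumes "n \<ge> 1" "m \<ge> 1" "1 \<le> k" "k \<le> m"
  shows "\<forall>x\<in>{(real k - 1)/real m .. real k/real m}.
     (comp_bern n m ^^ r) f x = (bern_ab ((real k - 1)/real m) (real k/real m) n ^^ r) f x"
proof (induction r)
  case 0 then show ?case by simp
next
  case (Suc r)
  define a where "a = (real k - 1)/real m"
  define b where "b = real k/real m"
  have mpos: "real m > 0" using assms by simp
  have ab: "a < b" unfolding a_def b_def using mpos by (simp add: divide_strict_right_mono)
  note IH = Suc[folded a_def b_def]
  show ?case unfolding a_def[symmetric] b_def[symmetric]
  proof
    fix x assume x: "x \<in> {a..b}"
    have "sub_idx m x = k \<or> (x = a \<and> k \<ge> 2 \<and> sub_idx m x = k - 1)"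
      using sub_idx_cases[OF assms(2,3)] x unfolding a_def b_def by blast
    then show "(comp_bern n m ^^ Suc r) f x = (bern_ab a b n ^^ Suc r) f x"
    proof
      assume "sub_idx m x = k"
      then have "(comp_bern n m ^^ Suc r) f x = bern_ab a b n ((comp_bern n m ^^ r) f) x"
        by (simp add: comp_bern_def a_def b_def)
      also have "\<dots> = bern_ab a b n ((bern_ab a b n ^^ r) f) x"
        by (rule bern_cong[OF ab]) (use IH in blast)
      finally show ?thesis by simp
    next
      assume h: "x = a \<and> k \<ge> 2 \<and> sub_idx m x = k - 1"
      define a' where "a' = (real (k-1) - 1)/real m"
      have rk: "real (k - 1) = real k - 1" using assms by (simp add: of_nat_diff)
      have a'a: "a' < a" unfolding a'_def a_def rk using mpos by (simp add: divide_strict_right_mono)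
      have hs: "sub_idx m x = k - 1" and hx: "x = a" using h by auto
      have "(comp_bern n m ^^ Suc r) f x = comp_bern n m ((comp_bern n m ^^ r) f) x" by simp
      also have "\<dots> = bern_ab a' a n ((comp_bern n m ^^ r) f) x"
        unfolding comp_bern_def Let_def hs rk a'_def a_def ..
      also have "\<dots> = bern_ab a' a n ((comp_bern n m ^^ r) f) a" using hx by simp
      also have "\<dots> = (comp_bern n m ^^ r) f a" by (rule bern_right[OF a'a assms(1)])
      also have "\<dots> = (bern_ab a b n ^^ r) f a" using IH ab by auto
      also have "\<dots> = (bern_ab a b n ^^ Suc r) f a" using bern_left[OF ab assms(1)] by simp
      finally show ?thesis using h by simp
    qed
  qed
qed

lemma pw_piece:
  assumes "m \<ge> 1" "1 \<le> k" "x \<in> {(real k - 1)/real m .. real k/real m}"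
  shows "pw_lin m f x = ((real k/real m - x) * f ((real k - 1)/real m) + (x - (real k - 1)/real m) * f (real k/real m))
           / (real k/real m - (real k - 1)/real m)"
proof -
  have mpos: "real m > 0" using assms by simp
  have "sub_idx m x = k \<or> (x = (real k - 1)/real m \<and> k \<ge> 2 \<and> sub_idx m x = k - 1)"
    using sub_idx_cases[OF assms] .
  then show ?thesis
  proof
    assume "sub_idx m x = k" then show ?thesis by (simp add: pw_lin_def Let_def)
  next
    assume h: "x = (real k - 1)/real m \<and> k \<ge> 2 \<and> sub_idx m x = k - 1"
    have rk: "real (k - 1) = real k - 1" using assms by (simp add: of_nat_diff)
    have hs: "sub_idx m x = k - 1" and hx: "x = (real k - 1)/real m" using h by auto
    have "pw_lin m f x = (((real k - 1)/real m - x) * f ((real k - 1 - 1)/real m) + (x - (real k - 1 - 1)/real m) * f ((real k - 1)/real m))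
           / ((real k - 1)/real m - (real k - 1 - 1)/real m)"
      unfolding pw_lin_def Let_def hs rk ..
    also have "\<dots> = f ((real k - 1)/real m)" unfolding hx using mpos by (simp add: field_simps)
    also have "\<dots> = ((real k/real m - x) * f ((real k - 1)/real m) + (x - (real k - 1)/real m) * f (real k/real m))
           / (real k/real m - (real k - 1)/real m)" unfolding hx using mpos by (simp add: field_simps)
    finally show ?thesis .
  qed
qed

lemma discrete_concave_nonneg:
  fixes u :: "nat \<Rightarrow> real"
  assumes u0: "u 0 = 0" and uN: "u N = 0"
    and conc: "\<And>j. 0 < j \<Longrightarrow> j < N \<Longrightarrow> u (j-1) + u (j+1) \<le> 2 * u j"
    and j: "j \<le> N"
  shows "0 \<le> u j"
proof (rule ccontr)
  assume neg: "\<not> 0 \<le> u j"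
  define mv where "mv = Min (u ` {..N})"
  have mvle: "\<And>i. i \<le> N \<Longrightarrow> mv \<le> u i" unfolding mv_def by auto
  have "mv \<in> u ` {..N}" unfolding mv_def by (intro Min_in) auto
  then obtain j0 where j0: "j0 \<le> N" "u j0 = mv" by auto
  define J where "J = {i. i \<le> N \<and> u i = mv}"
  have "j0 \<in> J" using j0 unfolding J_def by auto
  define j1 where "j1 = Min J"
  have finJ: "finite J" unfolding J_def by auto
  have j1J: "j1 \<in> J" unfolding j1_def using finJ \<open>j0 \<in> J\<close> by (intro Min_in) auto
  have j1min: "\<And>i. i \<in> J \<Longrightarrow> j1 \<le> i" unfolding j1_def using finJ by auto
  have mvneg: "mv < 0" using mvle[OF j] neg by simp
  have j1N: "j1 \<le> N" "u j1 = mv" using j1J unfolding J_def by auto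
  have "j1 \<noteq> 0" using j1N mvneg u0 by (metis less_irrefl)
  moreover have "j1 \<noteq> N" using j1N mvneg uN by auto
  ultimately have jj: "0 < j1" "j1 < N" using j1N by auto
  have "j1 - 1 \<notin> J" using j1min jj by fastforce
  then have "u (j1 - 1) \<noteq> mv" unfolding J_def using jj by auto
  then have "u (j1 - 1) > mv" using mvle[of "j1-1"] jj by force
  moreover have "u (j1+1) \<ge> mv" using mvle[of "j1+1"] jj by auto
  ultimately show False using conc[OF jj] j1N by linarith
qed

lemma cell_err:
  fixes f :: "real \<Rightarrow> real"
  assumes pq: "p < q" and cont: "continuous_on {p..q} f"
    and hW: "\<And>y k. y - k \<in> {p..q} \<Longrightarrow> y + k \<in> {p..q} \<Longrightarrow> \<bar>k\<bar> \<le> (q-p)/2 \<Longrightarrow>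
               \<bar>f (y-k) - 2 * f y + f (y+k)\<bar> \<le> W"
    and t: "t \<in> {p..q}"
  shows "\<bar>f t - (f p + (f q - f p) * (t - p) / (q - p))\<bar> \<le> W"
proof -
  define D where "D = (f q - f p) / (q - p)"
  define E where "E t = f t - (f p + D * (t - p))" for t
  have cE: "continuous_on {p..q} (\<lambda>t. \<bar>E t\<bar>)" unfolding E_def
    by (intro continuous_intros cont)
  obtain ts where ts: "ts \<in> {p..q}" and tsmax: "\<And>t. t \<in> {p..q} \<Longrightarrow> \<bar>E t\<bar> \<le> \<bar>E ts\<bar>"
    using continuous_attains_sup[OF compact_Icc _ cE] pq by fastforce
  have Ep: "E p = 0" and Eq: "E q = 0" unfolding E_def D_def using pq by auto
  have sd: "f (y-k) - 2 * f y + f (y+k) = E (y-k) - 2 * E y + E (y+k)" for y k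
    unfolding E_def by (simp add: algebra_simps)
  have "\<bar>E ts\<bar> \<le> W"
  proof (cases "ts \<le> (p+q)/2")
    case True
    define k where "k = ts - p"
    have in1: "ts - k \<in> {p..q}" "ts + k \<in> {p..q}" "\<bar>k\<bar> \<le> (q-p)/2"
      using True ts unfolding k_def by auto
    have "\<bar>E (ts+k)\<bar> \<le> \<bar>E ts\<bar>" using tsmax in1 by blast
    moreover have "E (ts - k) = 0" using Ep unfolding k_def by simp
    ultimately have "\<bar>E ts\<bar> \<le> \<bar>E (ts-k) - 2 * E ts + E (ts+k)\<bar>" by linarith
    also have "\<dots> \<le> W" using hW[OF in1] sd by simp
    finally show ?thesis .
  next
    case False
    define k where "k = q - ts"
    have in1: "ts - k \<in> {p..q}" "ts + k \<in> {p..q}" "\<bar>k\<bar> \<le> (q-p)/2"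
      using False ts unfolding k_def by auto
    have "\<bar>E (ts-k)\<bar> \<le> \<bar>E ts\<bar>" using tsmax in1 by blast
    moreover have "E (ts + k) = 0" using Eq unfolding k_def by simp
    ultimately have "\<bar>E ts\<bar> \<le> \<bar>E (ts-k) - 2 * E ts + E (ts+k)\<bar>" by linarith
    also have "\<dots> \<le> W" using hW[OF in1] sd by simp
    finally show ?thesis .
  qed
  moreover have "(f q - f p) * (t - p) / (q - p) = D * (t - p)" unfolding D_def by simp
  ultimately show ?thesis using tsmax[OF t] unfolding E_def by simp
qed

lemma key:
  fixes L :: "(real \<Rightarrow> real) \<Rightarrow> real" and f :: "real \<Rightarrow> real"
  assumes ab: "a < b" and x: "x \<in> {a..b}"
    and Lmono: "\<And>g h. (\<forall>t\<in>{a..b}. g t \<le> h t) \<Longrightarrow> L g \<le> L h"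
    and Ldiff: "\<And>g h. L (\<lambda>t. g t - h t) = L g - L h"
    and Lcm: "\<And>c g. L (\<lambda>t. c * g t) = c * L g"
    and Laff: "\<And>c0 c1. L (\<lambda>t. c0 + c1 * t) = c0 + c1 * x"
    and Lw: "L (\<lambda>t. (t-a)*(b-t)) \<le> \<delta>^2"
    and dpos: "\<delta> > 0" and dle: "2 * \<delta> \<le> b - a"
    and cont: "continuous_on {a..b} f"
    and hW: "\<And>y k. y - k \<in> {a..b} \<Longrightarrow> y + k \<in> {a..b} \<Longrightarrow> \<bar>k\<bar> \<le> \<delta> \<Longrightarrow>
               \<bar>f (y-k) - 2 * f y + f (y+k)\<bar> \<le> W"
  shows "\<bar>L f - ((b-x) * f a + (x-a) * f b)/(b-a)\<bar> \<le> 17/8 * W"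
proof -
  have W0: "0 \<le> W" using hW[of a 0] ab dpos by simp
  define N where "N = nat \<lceil>(b-a)/\<delta>\<rceil>"
  have N1: "real N \<ge> (b-a)/\<delta>" unfolding N_def by linarith
  have N2: "real N < (b-a)/\<delta> + 1" unfolding N_def
    using dpos ab ceiling_correct[of "(b-a)/\<delta>"] by (simp add: of_nat_nat)
  have q2: "(b-a)/\<delta> \<ge> 2" using dle dpos by (simp add: field_simps)
  have Npos: "real N > 0" using N1 q2 by linarith
  define h where "h = (b-a)/real N"
  have hpos: "h > 0" unfolding h_def using Npos ab by simp
  have hd: "h \<le> \<delta>" unfolding h_def using N1 Npos dpos by (simp add: field_simps)
  have dh: "2 * \<delta> \<le> 3 * h"
  proof -
    have "\<delta> * real N < b - a + \<delta>" using N2 dpos by (simp add: field_simps)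
    then have "2 * (\<delta> * real N) \<le> 3 * (b - a)" using dle by (smt (verit))
    then show ?thesis unfolding h_def using Npos by (simp add: field_simps)
  qed
  define tt where "tt j = a + real j * h" for j :: nat
  have ttN: "tt N = b" unfolding tt_def h_def using Npos by simp
  have tt_in: "j \<le> N \<Longrightarrow> tt j \<in> {a..b}" for j
  proof -
    assume "j \<le> N"
    then have "real j * h \<le> real N * h" using hpos by (simp add: mult_right_mono)
    then show ?thesis unfolding tt_def using ttN hpos unfolding tt_def by auto
  qed
  have ttS: "tt (Suc j) = tt j + h" for j unfolding tt_def by (simp add: algebra_simps)
  define cell where "cell t = min (N-1) (nat \<lfloor>(t-a)/h\<rfloor>)" for t
  have cellp: "cell t < N \<and> tt (cell t) \<le> t \<and> t \<le> tt (Suc (cell t))" if t: "t \<in> {a..b}" for t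
  proof -
    define fl where "fl = \<lfloor>(t-a)/h\<rfloor>"
    have r0: "0 \<le> (t-a)/h" using t hpos by simp
    have rN: "(t-a)/h \<le> real N" using t hpos unfolding h_def using Npos ab by (simp add: field_simps)
    have fl0: "0 \<le> fl" unfolding fl_def using r0 by simp
    have fl1: "real_of_int fl \<le> (t-a)/h" "(t-a)/h < real_of_int fl + 1" unfolding fl_def by linarith+
    have N0: "N \<ge> 1" using Npos by simp
    show ?thesis
    proof (cases "nat fl \<le> N - 1")
      case True
      then have c: "cell t = nat fl" unfolding cell_def fl_def by simp
      have "real (nat fl) = real_of_int fl" using fl0 by simp
      then show ?thesis using True N0 fl1 hpos unfolding c tt_def
        by (auto simp: field_simps)
    next
      case False
      then have c: "cell t = N - 1" unfolding cell_def fl_def by simp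
      have "real_of_int fl \<ge> real N" using False fl0 N0 by linarith
      then have "(t-a)/h = real N" using fl1 rN by linarith
      then have "t - a = real N * h" using hpos by (simp add: field_simps)
      then have "t = b" unfolding h_def using Npos by simp
      moreover have "Suc (N - 1) = N" using N0 by simp
      ultimately show ?thesis unfolding c using ttN tt_in[of "N-1"] N0 by auto
    qed
  qed
  define g where "g t = f (tt (cell t)) + (f (tt (Suc (cell t))) - f (tt (cell t))) * (t - tt (cell t)) / h" for t
  have err: "\<bar>f t - g t\<bar> \<le> W" if t: "t \<in> {a..b}" for t
  proof -
    define j where "j = cell t"
    have jN: "j < N" and tj: "tt j \<le> t" "t \<le> tt (Suc j)" using cellp[OF t] unfolding j_def by auto
    have sub: "{tt j .. tt (Suc j)} \<subseteq> {a..b}" using tt_in[of j] tt_in[of "Suc j"] jN by auto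
    have pq: "tt j < tt (Suc j)" using ttS hpos by simp
    have "\<bar>f t - (f (tt j) + (f (tt (Suc j)) - f (tt j)) * (t - tt j) / (tt (Suc j) - tt j))\<bar> \<le> W"
    proof (rule cell_err[OF pq])
      show "continuous_on {tt j..tt (Suc j)} f" using continuous_on_subset[OF cont sub] .
      show "t \<in> {tt j..tt (Suc j)}" using tj by simp
      fix y k assume "y - k \<in> {tt j..tt (Suc j)}" "y + k \<in> {tt j..tt (Suc j)}" "\<bar>k\<bar> \<le> (tt (Suc j) - tt j) / 2"
      then show "\<bar>f (y - k) - 2 * f y + f (y + k)\<bar> \<le> W"
        using sub hd hpos ttS[of j] by (intro hW) auto
    qed
    then show ?thesis unfolding g_def j_def[symmetric] using ttS[of j] by simp
  qed
  have gnode: "g (tt j) = f (tt j)" if j: "j \<le> N" for j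
  proof (cases "j < N")
    case True
    have "(tt j - a)/h = real j" unfolding tt_def using hpos by simp
    then have "cell (tt j) = j" unfolding cell_def using True by simp
    then show ?thesis unfolding g_def by simp
  next
    case False
    then have jN: "j = N" using j by simp
    have N0: "N \<ge> 1" using Npos by simp
    have "(tt N - a)/h = real N" unfolding tt_def using hpos by simp
    then have c: "cell (tt N) = N - 1" unfolding cell_def by simp
    have sN: "Suc (N-1) = N" using N0 by simp
    have "tt N = tt (N-1) + h" using ttS[of "N-1"] sN by simp
    then show ?thesis unfolding g_def c sN jN using hpos by simp
  qed
  define S where "S t = ((b-t) * f a + (t-a) * f b)/(b-a)" for t
  define w where "w t = (t-a)*(b-t)" for t
  define c where "c = W / (2*h^2)"
  have c0: "0 \<le> c" unfolding c_def using W0 by simp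
  have c2: "c * (2*h^2) = W" unfolding c_def using hpos by simp
  have wsd: "w (p-h) + w (p+h) - 2 * w p = -2*h^2" for p unfolding w_def by (simp add: algebra_simps power2_eq_square)
  define \<alpha> where "\<alpha> = (b*f a - a*f b)/(b-a)"
  define \<beta> where "\<beta> = (f b - f a)/(b-a)"
  have Sl: "S t = \<alpha> + \<beta> * t" for t
  proof -
    have "S t = ((b*f a - a*f b) + (f b - f a)*t)/(b-a)" unfolding S_def
      by (rule arg_cong[where f="\<lambda>z. z/(b-a)"]) (simp add: algebra_simps)
    then show ?thesis unfolding \<alpha>_def \<beta>_def by (simp add: add_divide_distrib)
  qed
  have Ssd: "S (p-h) + S (p+h) - 2 * S p = 0" for p unfolding Sl by (simp add: algebra_simps)
  have tta: "tt 0 = a" unfolding tt_def by simp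
  have Sa: "S a = f a" and Sb: "S b = f b" unfolding S_def using ab by auto
  have wa: "w a = 0" and wb: "w b = 0" unfolding w_def by auto
  have ttm: "tt (j - 1) = tt j - h" if "0 < j" for j
    using that unfolding tt_def by (simp add: of_nat_diff algebra_simps)
  have Dn: "\<bar>f (tt j - h) - 2 * f (tt j) + f (tt j + h)\<bar> \<le> W" if "0 < j" "j < N" for j
  proof (rule hW)
    show "tt j - h \<in> {a..b}" using tt_in[of "j-1"] ttm[OF that(1)] that by auto
    show "tt j + h \<in> {a..b}" using tt_in[of "Suc j"] ttS[of j] that by auto
    show "\<bar>h\<bar> \<le> \<delta>" using hd hpos by simp
  qed
  define u1 where "u1 j = c * w (tt j) - (f (tt j) - S (tt j))" for j
  define u2 where "u2 j = c * w (tt j) + (f (tt j) - S (tt j))" for j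
  have u1nn: "0 \<le> u1 j" if "j \<le> N" for j
  proof (rule discrete_concave_nonneg[OF _ _ _ that])
    show "u1 0 = 0" unfolding u1_def tta Sa wa by simp
    show "u1 N = 0" unfolding u1_def ttN Sb wb by simp
    fix i assume i: "0 < i" "i < N"
    have e: "u1 (i-1) + u1 (i+1) - 2 * u1 i = c * (w (tt i - h) + w (tt i + h) - 2 * w (tt i))
        - (f (tt i - h) - 2 * f (tt i) + f (tt i + h)) + (S (tt i - h) + S (tt i + h) - 2 * S (tt i))"
      unfolding u1_def ttm[OF i(1)] using ttS[of i] by (simp add: algebra_simps)
    have "c * (w (tt i - h) + w (tt i + h) - 2 * w (tt i)) = - W" using wsd c2 by simp
    then show "u1 (i-1) + u1 (i+1) \<le> 2 * u1 i" using e Ssd[of "tt i"] Dn[OF i] by linarith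
  qed
  have u2nn: "0 \<le> u2 j" if "j \<le> N" for j
  proof (rule discrete_concave_nonneg[OF _ _ _ that])
    show "u2 0 = 0" unfolding u2_def tta Sa wa by simp
    show "u2 N = 0" unfolding u2_def ttN Sb wb by simp
    fix i assume i: "0 < i" "i < N"
    have e: "u2 (i-1) + u2 (i+1) - 2 * u2 i = c * (w (tt i - h) + w (tt i + h) - 2 * w (tt i))
        + (f (tt i - h) - 2 * f (tt i) + f (tt i + h)) - (S (tt i - h) + S (tt i + h) - 2 * S (tt i))"
      unfolding u2_def ttm[OF i(1)] using ttS[of i] by (simp add: algebra_simps)
    have "c * (w (tt i - h) + w (tt i + h) - 2 * w (tt i)) = - W" using wsd c2 by simp
    then show "u2 (i-1) + u2 (i+1) \<le> 2 * u2 i" using e Ssd[of "tt i"] Dn[OF i] by linarith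
  qed
  have vbound: "\<bar>g t - S t\<bar> \<le> c * w t" if t: "t \<in> {a..b}" for t
  proof -
    define j where "j = cell t"
    have jN: "j < N" and tj: "tt j \<le> t" "t \<le> tt (Suc j)" using cellp[OF t] unfolding j_def by auto
    define p where "p = tt j"
    define l where "l = (t - p)/h"
    have l01: "0 \<le> l" "l \<le> 1" unfolding l_def p_def using tj ttS[of j] hpos by (auto simp: field_simps)
    have p1: "tt (Suc j) = p + h" unfolding p_def by (rule ttS)
    have gt: "g t = (1-l) * f p + l * f (p+h)" unfolding g_def j_def[symmetric] p_def[symmetric] p1 l_def
      using hpos by (simp add: field_simps)
    have St: "S t = (1-l) * S p + l * S (p+h)" unfolding Sl l_def using hpos by (simp add: field_simps)
    have wt: "w t = (1-l) * w p + l * w (p+h) + (t-p)*(p+h-t)" unfolding w_def l_def using hpos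
      by (simp add: field_simps)
    have Q: "0 \<le> (t-p)*(p+h-t)" using tj p1 unfolding p_def by simp
    have e1: "c * w t - (g t - S t) = (1-l) * u1 j + l * u1 (Suc j) + c * ((t-p)*(p+h-t))"
      unfolding u1_def gt St wt p_def[symmetric] p1 by (simp add: algebra_simps)
    have e2: "c * w t + (g t - S t) = (1-l) * u2 j + l * u2 (Suc j) + c * ((t-p)*(p+h-t))"
      unfolding u2_def gt St wt p_def[symmetric] p1 by (simp add: algebra_simps)
    have "0 \<le> (1-l) * u1 j + l * u1 (Suc j) + c * ((t-p)*(p+h-t))"
      using mult_nonneg_nonneg[OF _ u1nn[of j], of "1-l"] mult_nonneg_nonneg[OF _ u1nn[of "Suc j"], of l]
        mult_nonneg_nonneg[OF c0 Q] l01 jN by simp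
    moreover have "0 \<le> (1-l) * u2 j + l * u2 (Suc j) + c * ((t-p)*(p+h-t))"
      using mult_nonneg_nonneg[OF _ u2nn[of j], of "1-l"] mult_nonneg_nonneg[OF _ u2nn[of "Suc j"], of l]
        mult_nonneg_nonneg[OF c0 Q] l01 jN by simp
    ultimately show ?thesis using e1 e2 by linarith
  qed
  have SL: "S = (\<lambda>t. \<alpha> + \<beta> * t)" using Sl by (rule ext)
  have LS: "L S = S x" unfolding SL by (rule Laff)
  have Lv: "L (\<lambda>t. g t - S t) = L g - S x" using Ldiff[of g S] LS by simp
  have v1: "L (\<lambda>t. g t - S t) \<le> c * \<delta>^2"
  proof -
    have "L (\<lambda>t. g t - S t) \<le> L (\<lambda>t. c * w t)" using vbound by (intro Lmono) (auto simp: abs_le_iff)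
    also have "\<dots> = c * L w" by (rule Lcm)
    also have "\<dots> \<le> c * \<delta>^2" using Lw c0 unfolding w_def by (simp add: mult_left_mono)
    finally show ?thesis .
  qed
  have v2: "- L (\<lambda>t. g t - S t) \<le> c * \<delta>^2"
  proof -
    have "- L (\<lambda>t. g t - S t) = L (\<lambda>t. (-1) * (g t - S t))" using Lcm[of "-1" "\<lambda>t. g t - S t"] by simp
    also have "\<dots> \<le> L (\<lambda>t. c * w t)" using vbound by (intro Lmono) (auto simp: abs_le_iff)
    also have "\<dots> = c * L w" by (rule Lcm)
    also have "\<dots> \<le> c * \<delta>^2" using Lw c0 unfolding w_def by (simp add: mult_left_mono)
    finally show ?thesis .
  qed
  have LW: "L (\<lambda>t. W + 0 * t) = W" using Laff[of W 0] by simp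
  have e1: "L (\<lambda>t. f t - g t) \<le> W"
  proof -
    have "L (\<lambda>t. f t - g t) \<le> L (\<lambda>t. W + 0 * t)" using err by (intro Lmono) (auto simp: abs_le_iff)
    then show ?thesis using LW by simp
  qed
  have e2: "- L (\<lambda>t. f t - g t) \<le> W"
  proof -
    have "- L (\<lambda>t. f t - g t) = L (\<lambda>t. (-1) * (f t - g t))" using Lcm[of "-1" "\<lambda>t. f t - g t"] by simp
    also have "\<dots> \<le> L (\<lambda>t. W + 0 * t)" using err by (intro Lmono) (auto simp: abs_le_iff)
    finally show ?thesis using LW by simp
  qed
  have Lfg: "L (\<lambda>t. f t - g t) = L f - L g" by (rule Ldiff)
  have cd: "c * \<delta>^2 \<le> 9/8 * W"
  proof -
    have "\<delta>^2 \<le> (3*h/2)^2" using dh dpos by (intro power_mono) auto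
    then have "c * \<delta>^2 \<le> c * (3*h/2)^2" using c0 by (rule mult_left_mono)
    also have "\<dots> = 9/8 * W" unfolding c_def using hpos by (simp add: field_simps power2_eq_square)
    finally show ?thesis .
  qed
  have "\<bar>L f - S x\<bar> \<le> W + c * \<delta>^2" using v1 v2 e1 e2 Lv Lfg by (simp add: abs_le_iff) 
  then show ?thesis using cd unfolding S_def by simp
qed

lemma omega2_ge:
  assumes cont: "continuous_on {0..1} f" and "y - k \<in> {0..1}" "y + k \<in> {0..1}" "\<bar>k\<bar> \<le> d"
  shows "\<bar>f (y-k) - 2 * f y + f (y+k)\<bar> \<le> omega2 f d"
proof -
  have "bounded (f ` {0..1})" by (intro compact_imp_bounded compact_continuous_image cont compact_Icc)
  then obtain B where B: "\<And>t. t \<in> {0..1} \<Longrightarrow> \<bar>f t\<bar> \<le> B" unfolding bounded_iff by (metis (no_types, lifting) image_eqI real_norm_def)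
  have bdd: "bdd_above {\<bar>f (x - h) - 2 * f x + f (x + h)\<bar> | x h.
                        x - h \<in> {0..1} \<and> x + h \<in> {0..1} \<and> \<bar>h\<bar> \<le> d}"
  proof (rule bdd_aboveI)
    fix z assume "z \<in> {\<bar>f (x - h) - 2 * f x + f (x + h)\<bar> | x h.
                        x - h \<in> {0..1} \<and> x + h \<in> {0..1} \<and> \<bar>h\<bar> \<le> d}"
    then obtain x h where z: "z = \<bar>f (x - h) - 2 * f x + f (x + h)\<bar>" and xh: "x - h \<in> {0..1}" "x + h \<in> {0..1}" by auto
    have "x \<in> {0..1}" using xh by auto
    then show "z \<le> 4 * B" using B[OF xh(1)] B[OF xh(2)] B[of x] z by (simp add: abs_le_iff)
  qed
  show ?thesis unfolding omega2_def by (rule cSup_upper[OF _ bdd]) (use assms in blast)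
qed

lemma omega2_least:
  assumes "0 \<le> d" "\<And>y k. y - k \<in> {0..1} \<Longrightarrow> y + k \<in> {0..1} \<Longrightarrow> \<bar>k\<bar> \<le> d \<Longrightarrow>
       \<bar>f (y-k) - 2 * f y + f (y+k)\<bar> \<le> M"
  shows "omega2 f d \<le> M"
  unfolding omega2_def
proof (rule cSup_least)
  show "{\<bar>f (x - h) - 2 * f x + f (x + h)\<bar> | x h. x - h \<in> {0..1} \<and> x + h \<in> {0..1} \<and> \<bar>h\<bar> \<le> d} \<noteq> {}"
    using assms(1) by (auto intro!: exI[of _ 0])
qed (use assms in auto)

lemma omega2_nonneg:
  assumes "continuous_on {0..1} f" "0 \<le> d"
  shows "0 \<le> omega2 f d"
  using omega2_ge[OF assms(1), of 0 0 d] assms by simp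

lemma omega2_mono:
  assumes "continuous_on {0..1} f" "0 \<le> d1" "d1 \<le> d2"
  shows "omega2 f d1 \<le> omega2 f d2"
  using assms by (intro omega2_least omega2_ge) auto

lemma omega2_small:
  assumes cont: "continuous_on {0..1} f" and e: "e > 0"
  shows "\<exists>d>0. \<forall>\<eta>. 0 \<le> \<eta> \<longrightarrow> \<eta> \<le> d \<longrightarrow> omega2 f \<eta> \<le> e"
proof -
  have "uniformly_continuous_on {0..1} f" by (rule compact_uniformly_continuous[OF cont compact_Icc])
  then obtain d where d: "d > 0" and hd: "\<And>x x'. x \<in> {0..1} \<Longrightarrow> x' \<in> {0..1} \<Longrightarrow> dist x' x < d \<Longrightarrow> dist (f x') (f x) < e/2"
    unfolding uniformly_continuous_on_def using e by (metis half_gt_zero)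
  show ?thesis
  proof (intro exI[of _ "d/2"] conjI allI impI)
    show "0 < d/2" using d by simp
    fix \<eta> :: real assume "0 \<le> \<eta>" "\<eta> \<le> d/2"
    then show "omega2 f \<eta> \<le> e"
    proof (intro omega2_least)
      fix y k assume yk: "y - k \<in> {0..1}" "y + k \<in> {0..1}" "\<bar>k\<bar> \<le> \<eta>"
      have y: "y \<in> {0..1}" using yk by auto
      have k: "\<bar>k\<bar> < d" using yk \<open>\<eta> \<le> d/2\<close> d by linarith
      have "\<bar>f (y-k) - f y\<bar> < e/2" using hd[OF y yk(1)] k by (simp add: dist_real_def)
      moreover have "\<bar>f (y+k) - f y\<bar> < e/2" using hd[OF y yk(2)] k by (simp add: dist_real_def)
      ultimately show "\<bar>f (y-k) - 2 * f y + f (y+k)\<bar> \<le> e" by linarith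
    qed
  qed
qed

lemma pointwise:
  fixes n m r :: nat and f :: "real \<Rightarrow> real"
  assumes n1: "n \<ge> 1" and m1: "m \<ge> 1" and cont: "continuous_on {0..1} f"
    and k: "k \<in> {1..m}" and x: "x \<in> {(real k - 1) / real m .. real k / real m}"
  shows "\<bar>(comp_bern n m ^^ r) f x - pw_lin m f x\<bar>
              \<le> 9 / 4 * omega2 f (sqrt ((x - (real k - 1) / real m) * (real k / real m - x)
                                        * (1 - 1 / real n) ^ r))"
proof -
  define a where "a = (real k - 1) / real m"
  define b where "b = real k / real m"
  have mpos: "real m > 0" using m1 by simp
  have ab: "a < b" unfolding a_def b_def using mpos by (simp add: divide_strict_right_mono)
  have a0: "0 \<le> a" unfolding a_def using k by auto
  have b1: "b \<le> 1" unfolding b_def using k mpos by auto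
  have xab: "x \<in> {a..b}" using x unfolding a_def b_def .
  have sub: "{a..b} \<subseteq> {0..1}" using a0 b1 by auto
  define q where "q = 1 - 1 / real n"
  have q0: "0 \<le> q" unfolding q_def using n1 by simp
  define L where "L g = (bern_ab a b n ^^ r) g x" for g
  have eq1: "(comp_bern n m ^^ r) f x = L f"
  proof -
    have k1: "1 \<le> k" and km: "k \<le> m" using k by auto
    have "\<forall>x\<in>{a..b}. (comp_bern n m ^^ r) f x = (bern_ab a b n ^^ r) f x"
      using comp_iter[OF n1 m1 k1 km, of r f] unfolding a_def b_def .
    then show ?thesis unfolding L_def using xab by blast
  qed
  have eq2: "pw_lin m f x = ((b-x) * f a + (x-a) * f b)/(b-a)"
  proof -
    have k1: "1 \<le> k" using k by auto
    show ?thesis unfolding a_def b_def by (rule pw_piece[OF m1 k1 x])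
  qed
  define \<delta> where "\<delta> = sqrt ((x - a) * (b - x) * q ^ r)"
  have wx0: "0 \<le> (x - a) * (b - x)" using xab by simp
  have nn: "0 \<le> (x - a) * (b - x) * q ^ r" by (rule mult_nonneg_nonneg[OF wx0]) (simp add: q0)
  have d0: "0 \<le> \<delta>" unfolding \<delta>_def using nn by (rule real_sqrt_ge_zero)
  have dsq: "\<delta>^2 = (x - a) * (b - x) * q ^ r" unfolding \<delta>_def using nn by (rule real_sqrt_pow2)
  have Lmono: "L g \<le> L h" if "\<forall>t\<in>{a..b}. g t \<le> h t" for g h
    unfolding L_def using it_mono[OF ab that] xab by blast
  have Ldiff: "L (\<lambda>t. g t - h t) = L g - L h" for g h unfolding L_def by (simp add: it_diff)
  have Lcm: "L (\<lambda>t. c * g t) = c * L g" for c g unfolding L_def by (simp add: it_cmult)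
  have Laff: "L (\<lambda>t. c0 + c1 * t) = c0 + c1 * x" for c0 c1 unfolding L_def by (rule it_affine[OF ab n1 xab])
  have Lw0: "(bern_ab a b n ^^ r) (\<lambda>t. (t-a)*(b-t)) x = (1 - 1/real n)^r * ((x-a)*(b-x))"
    using it_w[OF ab n1, of r] xab by blast
  have Lw: "L (\<lambda>t. (t-a)*(b-t)) = \<delta>^2" unfolding L_def dsq q_def Lw0 by (rule mult.commute)
  have dle: "2 * \<delta> \<le> b - a"
  proof -
    have "(b-a)^2 - 4*((x-a)*(b-x)) = ((x-a)-(b-x))^2" by (simp add: power2_eq_square algebra_simps)
    then have "4*((x-a)*(b-x)) \<le> (b-a)^2" using zero_le_power2[of "(x-a)-(b-x)"] by linarith
    then have w4: "(x-a)*(b-x) \<le> ((b-a)/2)^2" by (simp add: power_divide)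
    have q1: "q \<le> 1" unfolding q_def by simp
    have qr: "q ^ r \<le> 1" by (rule power_le_one[OF q0 q1])
    have "(x-a)*(b-x)*q^r \<le> (x-a)*(b-x)" using mult_left_le[OF qr wx0] .
    then have "\<delta>^2 \<le> ((b-a)/2)^2" unfolding dsq using w4 by linarith
    moreover have ba0: "0 \<le> (b-a)/2" using ab by simp
    ultimately have "\<delta> \<le> (b-a)/2" by (rule power2_le_imp_le)
    then show ?thesis by simp
  qed
  have contab: "continuous_on {a..b} f" using continuous_on_subset[OF cont sub] .
  have main: "\<bar>L f - ((b-x) * f a + (x-a) * f b)/(b-a)\<bar> \<le> 9/4 * omega2 f \<delta>"
  proof (cases "\<delta> > 0")
    case True
    have W0: "0 \<le> omega2 f \<delta>" using omega2_nonneg[OF cont d0] .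
    have "\<bar>L f - ((b-x) * f a + (x-a) * f b)/(b-a)\<bar> \<le> 17/8 * omega2 f \<delta>"
    proof (rule key[OF ab xab Lmono Ldiff Lcm Laff _ True dle contab])
      show "L (\<lambda>t. (t - a) * (b - t)) \<le> \<delta>\<^sup>2" using Lw by simp
      fix y k assume "y - k \<in> {a..b}" "y + k \<in> {a..b}" "\<bar>k\<bar> \<le> \<delta>"
      then show "\<bar>f (y - k) - 2 * f y + f (y + k)\<bar> \<le> omega2 f \<delta>"
        using sub by (intro omega2_ge[OF cont]) auto
    qed
    moreover have "17/8 * omega2 f \<delta> \<le> 9/4 * omega2 f \<delta>"
      using mult_right_mono[of "17/8" "9/4" "omega2 f \<delta>"] W0 by simp
    ultimately show ?thesis by (rule order_trans)
  next
    case False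
    then have dz: "\<delta> = 0" using d0 by simp
    have W0: "0 \<le> omega2 f \<delta>" using omega2_nonneg[OF cont d0] .
    have small: "\<bar>L f - ((b-x) * f a + (x-a) * f b)/(b-a)\<bar> \<le> 17/8 * e" if e: "e > 0" for e
    proof -
      obtain d where d: "d > 0" and hd: "\<And>\<eta>. 0 \<le> \<eta> \<Longrightarrow> \<eta> \<le> d \<Longrightarrow> omega2 f \<eta> \<le> e"
        using omega2_small[OF cont e] by blast
      define d' where "d' = min d ((b-a)/2)"
      have d'pos: "d' > 0" unfolding d'_def using d ab by simp
      show ?thesis
      proof (rule key[OF ab xab Lmono Ldiff Lcm Laff _ d'pos _ contab])
        show "L (\<lambda>t. (t - a) * (b - t)) \<le> d'\<^sup>2" using Lw dz by simp
        have "d' \<le> (b-a)/2" unfolding d'_def by (rule min.cobounded2)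
        then show "2 * d' \<le> b - a" by simp
        fix y k assume yk: "y - k \<in> {a..b}" "y + k \<in> {a..b}" "\<bar>k\<bar> \<le> d'"
        have "\<bar>f (y - k) - 2 * f y + f (y + k)\<bar> \<le> omega2 f d'"
          using sub yk by (intro omega2_ge[OF cont]) auto
        also have "\<dots> \<le> e" using hd[of d'] d'pos unfolding d'_def by simp
        finally show "\<bar>f (y - k) - 2 * f y + f (y + k)\<bar> \<le> e" .
      qed
    qed
    have "\<bar>L f - ((b-x) * f a + (x-a) * f b)/(b-a)\<bar> \<le> 0"
    proof (rule ccontr)
      assume "\<not> ?thesis"
      then have pos: "\<bar>L f - ((b-x) * f a + (x-a) * f b)/(b-a)\<bar> > 0" by simp
      have "\<bar>L f - ((b-x) * f a + (x-a) * f b)/(b-a)\<bar> \<le> 17/8 * (\<bar>L f - ((b-x) * f a + (x-a) * f b)/(b-a)\<bar>/4)"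
        using small[of "\<bar>L f - ((b-x) * f a + (x-a) * f b)/(b-a)\<bar>/4"] pos by simp
      then show False using pos by simp
    qed
    then show ?thesis using W0 by simp
  qed
  show ?thesis using main unfolding eq1 eq2 \<delta>_def q_def a_def b_def .
qed

lemma idx01:
  assumes m1: "m \<ge> 1" and x: "x \<in> {0..1}"
  shows "sub_idx m x \<in> {1..m} \<and> x \<in> {(real (sub_idx m x) - 1) / real m .. real (sub_idx m x) / real m}"
proof -
  have mpos: "real m > 0" using m1 by simp
  have mx: "0 \<le> real m * x" "real m * x \<le> real m" using x mpos by auto
  show ?thesis
  proof (cases "\<lceil>real m * x\<rceil> \<le> 0")
    case True
    then have "real m * x \<le> 0" by (meson ceiling_le_zero)
    then have "x = 0" using mx mpos x by (simp add: mult_le_0_iff)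
    moreover have "sub_idx m x = 1" unfolding sub_idx_def using True by simp
    ultimately show ?thesis using m1 mpos by auto
  next
    case False
    define c where "c = \<lceil>real m * x\<rceil>"
    have c1: "c \<ge> 1" using False unfolding c_def by simp
    have si: "sub_idx m x = nat c" unfolding sub_idx_def c_def[symmetric] using c1 by (simp add: max_def)
    have rc: "real (nat c) = real_of_int c" using c1 by simp
    have lo: "real_of_int c - 1 < real m * x" and hi: "real m * x \<le> real_of_int c" unfolding c_def
      by (simp_all add: ceiling_correct ceiling_less_iff)
    have cm: "c \<le> int m" unfolding c_def using mx(2) by (simp add: ceiling_le_iff)
    show ?thesis unfolding si rc using c1 cm lo hi mpos
      by (auto simp: field_simps)
  qed
qed

lemma pointwise01:
  fixes n m r :: nat and f :: "real \<Rightarrow> real"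
  assumes n1: "n \<ge> 1" and m1: "m \<ge> 1" and cont: "continuous_on {0..1} f"
    and x: "x \<in> {0..1}"
  shows "\<bar>(comp_bern n m ^^ r) f x - pw_lin m f x\<bar>
           \<le> 9 / 4 * omega2 f (1 / (2 * real m) * sqrt ((1 - 1 / real n) ^ r))"
proof -
  define k where "k = sub_idx m x"
  have k: "k \<in> {1..m}" and xk: "x \<in> {(real k - 1) / real m .. real k / real m}"
    using idx01[OF m1 x] unfolding k_def by auto
  define a where "a = (real k - 1) / real m"
  define b where "b = real k / real m"
  have mpos: "real m > 0" using m1 by simp
  have ba: "b - a = 1 / real m" unfolding a_def b_def by (simp add: diff_divide_distrib)
  define q where "q = 1 - 1 / real n"
  have q0: "0 \<le> q" unfolding q_def using n1 by simp
  have wx0: "0 \<le> (x - a) * (b - x)" using xk unfolding a_def b_def by simp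
  have w: "(x-a)*(b-x) \<le> (1 / (2 * real m))^2"
  proof -
    have "(b-a)^2 - 4*((x-a)*(b-x)) = ((x-a)-(b-x))^2" by (simp add: power2_eq_square algebra_simps)
    then have "4*((x-a)*(b-x)) \<le> (b-a)^2" using zero_le_power2[of "(x-a)-(b-x)"] by linarith
    then have "(x-a)*(b-x) \<le> (b-a)^2/4" by simp
    then show ?thesis unfolding ba by (simp add: power2_eq_square)
  qed
  have dd: "sqrt ((x - a) * (b - x) * q ^ r) \<le> 1 / (2 * real m) * sqrt (q ^ r)"
  proof -
    have "(x - a) * (b - x) * q ^ r \<le> (1 / (2 * real m))^2 * q ^ r"
      using w q0 by (intro mult_right_mono) auto
    then have "sqrt ((x - a) * (b - x) * q ^ r) \<le> sqrt ((1 / (2 * real m))^2 * q ^ r)" by simp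
    also have "\<dots> = 1 / (2 * real m) * sqrt (q ^ r)" using mpos by (simp add: real_sqrt_mult)
    finally show ?thesis .
  qed
  have "\<bar>(comp_bern n m ^^ r) f x - pw_lin m f x\<bar> \<le> 9/4 * omega2 f (sqrt ((x - a) * (b - x) * q ^ r))"
    using pointwise[OF n1 m1 cont k xk, of r] unfolding a_def b_def q_def .
  also have "\<dots> \<le> 9/4 * omega2 f (1 / (2 * real m) * sqrt (q ^ r))"
  proof -
    have "0 \<le> (x - a) * (b - x) * q ^ r" by (rule mult_nonneg_nonneg[OF wx0]) (simp add: q0)
    then have "0 \<le> sqrt ((x - a) * (b - x) * q ^ r)" by simp
    from omega2_mono[OF cont this dd] show ?thesis by (rule mult_left_mono) simp
  qed
  finally show ?thesis unfolding q_def .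
qed

theorem mainTheorem2:
  fixes n m r :: nat and f :: "real \<Rightarrow> real"
  assumes "n \<ge> 1" and "m \<ge> 1"
    and "continuous_on {0..1} f"
  shows "(\<forall>k \<in> {1..m}. \<forall>x \<in> {(real k - 1) / real m .. real k / real m}.
            \<bar>(comp_bern n m ^^ r) f x - pw_lin m f x\<bar>
              \<le> 9 / 4 * omega2 f (sqrt ((x - (real k - 1) / real m) * (real k / real m - x)
                                        * (1 - 1 / real n) ^ r)))
       \<and> sup_norm01 (\<lambda>x. (comp_bern n m ^^ r) f x - pw_lin m f x)
           \<le> 9 / 4 * omega2 f (1 / (2 * real m) * sqrt ((1 - 1 / real n) ^ r))
       \<and> uniform_limit {0..1} (\<lambda>s. (comp_bern n m ^^ s) f) (pw_lin m f) sequentially"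
proof (intro conjI)
  show "\<forall>k \<in> {1..m}. \<forall>x \<in> {(real k - 1) / real m .. real k / real m}.
            \<bar>(comp_bern n m ^^ r) f x - pw_lin m f x\<bar>
              \<le> 9 / 4 * omega2 f (sqrt ((x - (real k - 1) / real m) * (real k / real m - x)
                                        * (1 - 1 / real n) ^ r))"
    using pointwise[OF assms] by blast
  show "sup_norm01 (\<lambda>x. (comp_bern n m ^^ r) f x - pw_lin m f x)
           \<le> 9 / 4 * omega2 f (1 / (2 * real m) * sqrt ((1 - 1 / real n) ^ r))"
    unfolding sup_norm01_def
    by (rule cSup_least) (use pointwise01[OF assms] in auto)
  show "uniform_limit {0..1} (\<lambda>s. (comp_bern n m ^^ s) f) (pw_lin m f) sequentially"
  proof (rule uniform_limitI)
    fix e :: real assume e: "e > 0"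
    then have e4: "e/4 > 0" by simp
    obtain d where d: "d > 0" and hd: "\<And>\<eta>. 0 \<le> \<eta> \<Longrightarrow> \<eta> \<le> d \<Longrightarrow> omega2 f \<eta> \<le> e/4"
      using omega2_small[OF assms(3) e4] by blast
    define q where "q = 1 - 1 / real n"
    have q0: "0 \<le> q" and q1: "q < 1" unfolding q_def using assms(1) by auto
    have "(\<lambda>s. q ^ s) \<longlonglongrightarrow> 0" by (rule LIMSEQ_realpow_zero[OF q0 q1])
    moreover have "d^2 > 0" using d by simp
    ultimately have ev: "\<forall>\<^sub>F s in sequentially. q ^ s < d^2" by (rule order_tendstoD)
    show "\<forall>\<^sub>F s in sequentially. \<forall>x\<in>{0..1}. dist ((comp_bern n m ^^ s) f x) (pw_lin m f x) < e"
    proof (rule eventually_mono[OF ev], intro ballI)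
      fix s :: nat and x :: real assume qs: "q ^ s < d^2" and x: "x \<in> {0..1}"
      define \<eta> where "\<eta> = 1 / (2 * real m) * sqrt (q ^ s)"
      have mpos: "real m \<ge> 1" using assms(2) by simp
      have eta0: "0 \<le> \<eta>" unfolding \<eta>_def using q0 by simp
      have "sqrt (q ^ s) \<le> d" using qs d by (intro real_le_lsqrt) auto
      moreover have "1 / (2 * real m) \<le> 1" using mpos by simp
      ultimately have "\<eta> \<le> 1 * d" unfolding \<eta>_def using q0 d
        by (intro mult_mono) auto
      then have om: "omega2 f \<eta> \<le> e/4" using hd eta0 by simp
      have "\<bar>(comp_bern n m ^^ s) f x - pw_lin m f x\<bar> \<le> 9/4 * omega2 f \<eta>"
        using pointwise01[OF assms x, of s] unfolding \<eta>_def q_def .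
      also have "\<dots> \<le> 9/4 * (e/4)" using om by simp
      also have "\<dots> < e" using e by simp
      finally show "dist ((comp_bern n m ^^ s) f x) (pw_lin m f x) < e" by (simp add: dist_real_def)
    qed
  qed
qed

end
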